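(* Let $q\ge 2$, let $\mathcal{X}=\mathcal{Y}=\{0,\ldots,q-1\}$, and let $G$ be an error graph for a discrete memoryless channel with input alphabet $\mathcal{X}$ and output alphabet $\mathcal{Y}$. Let $n=n_1+n_2$ with $n_1,n_2$ nonnegative integers, and let $H=(U\sqcup V,E)$ be the bipartite graph whose parts $U$ and $V$ are both copies of $\mathcal{X}^{n_1}$ (input and output sequences of length $n_1$), where $u\in U$ and $v\in V$ are adjacent if and only if $v\neq u$ and $v$ can be obtained from $u$ by a single error. Then a single-error-correcting transmission strategy of length $n$ with one-time feedback after the first $n_1$ symbols that transmits $$M=\sum_{u\in U}M(u)$$ messages exists if and only if there exists a family of nonadaptive single-error-correcting codes $\mathcal{C}(u)$, $u\in \mathcal{X}^{n_1}$, of length $n_2$, where $\mathcal{C}(u)$ has cardinality $M(u)$ and $F(u)$ free points, satisfying $$\sum_{u:\,(u,v)\in E}M(u)\le F(v)\quad\text{for every } v\in V.$$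
   Context: Error graph: a bipartite graph $G$ whose left part is $\mathcal{X}$ and right part is $\mathcal{Y}$; for $q_1\neq q_2$, $q_1$ and $q_2$ are joined if an error may change transmitted symbol $q_1$ into received symbol $q_2$. An error in a transmitted sequence means replacing one symbol $q_1$ by a symbol $q_2$ with $(q_1,q_2)$ an edge of $G$; "a single error" means at most one such replacement occurs in the whole transmission. A transmission strategy with one-time feedback after $n_1$ symbols for messages $m\in[M]$: the first $n_1$ transmitted symbols are a function of $m$ only; after they are sent, the encoder learns (error-free, instantaneously) the $n_1$ received symbols, and the remaining $n_2$ transmitted symbols are a function of $m$ and of those received symbols. For a message $m$, its cloud $B(m)$ is the set of output sequences in $\mathcal{Y}^n$ that can be received when $m$ is sent and at most one error occurs; the strategy is single-error-correcting (transmits $M$ messages) if the clouds $B(m)$, $m\in[M]$, are pairwise disjoint. A nonadaptive code of length $n_2$ is a strategy without feedback (each message is mapped to a fixed codeword in $\mathcal{X}^{n_2}$); it is single-error-correcting if its clouds are pairwise disjoint, and its free points are the points of $\mathcal{Y}^{n_2}$ lying in no cloud; $F(u)$ denotes their number for $\mathcal{C}(u)$. *)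

theory Defs
  imports Main
begin

definition seqs :: "nat \<Rightarrow> nat \<Rightarrow> nat list set" where
  "seqs q n = {xs. length xs = n \<and> set xs \<subseteq> {..<q}}"

text \<open>Error graph: a set of pairs (q1,q2), q1 \<noteq> q2, meaning q1 may be received as q2.\<close>

definition error_graph :: "nat \<Rightarrow> (nat \<times> nat) set \<Rightarrow> bool" where
  "error_graph q G \<longleftrightarrow> G \<subseteq> {..<q} \<times> {..<q} \<and> (\<forall>(a,b)\<in>G. a \<noteq> b)"

definition one_err :: "(nat \<times> nat) set \<Rightarrow> nat list \<Rightarrow> nat list set" where
  "one_err G x = {y. length y = length x \<and>
     (y = x \<or> (\<exists>i<length x. (x ! i, y ! i) \<in> G \<and> (\<forall>j<length x. j \<noteq> i \<longrightarrow> y ! j = x ! j)))}"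

definition fb_cloud :: "(nat \<times> nat) set \<Rightarrow> (nat \<Rightarrow> nat list) \<Rightarrow> (nat \<Rightarrow> nat list \<Rightarrow> nat list)
    \<Rightarrow> nat \<Rightarrow> nat list set" where
  "fb_cloud G f1 f2 m = {y1 @ y2 | y1 y2.
      (y1 = f1 m \<and> y2 \<in> one_err G (f2 m y1)) \<or> (y1 \<in> one_err G (f1 m) \<and> y2 = f2 m y1)}"

definition fb_strategy_sec :: "nat \<Rightarrow> (nat \<times> nat) set \<Rightarrow> nat \<Rightarrow> nat \<Rightarrow> nat
    \<Rightarrow> (nat \<Rightarrow> nat list) \<Rightarrow> (nat \<Rightarrow> nat list \<Rightarrow> nat list) \<Rightarrow> bool" where
  "fb_strategy_sec q G n1 n2 M f1 f2 \<longleftrightarrow>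
     (\<forall>m<M. f1 m \<in> seqs q n1 \<and> (\<forall>y1\<in>seqs q n1. f2 m y1 \<in> seqs q n2)) \<and>
     (\<forall>m<M. \<forall>m'<M. m \<noteq> m' \<longrightarrow> fb_cloud G f1 f2 m \<inter> fb_cloud G f1 f2 m' = {})"

definition code_sec :: "(nat \<times> nat) set \<Rightarrow> nat list set \<Rightarrow> bool" where
  "code_sec G C \<longleftrightarrow> (\<forall>c\<in>C. \<forall>c'\<in>C. c \<noteq> c' \<longrightarrow> one_err G c \<inter> one_err G c' = {})"

definition free_points :: "nat \<Rightarrow> nat \<Rightarrow> (nat \<times> nat) set \<Rightarrow> nat list set \<Rightarrow> nat list set" where
  "free_points q n G C = seqs q n - (\<Union>c\<in>C. one_err G c)"

definition H_edge :: "(nat \<times> nat) set \<Rightarrow> nat list \<Rightarrow> nat list \<Rightarrow> bool" where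
  "H_edge G u v \<longleftrightarrow> v \<noteq> u \<and> v \<in> one_err G u"

end

theory Submission
  imports Defs
begin

lemma finite_seqs: "finite (seqs q n)"
proof -
  have "seqs q n = {xs. set xs \<subseteq> {..<q} \<and> length xs = n}" by (auto simp: seqs_def)
  then show ?thesis using finite_lists_length_eq[of "{..<q}" n] by simp
qed

lemma one_err_len: "y \<in> one_err G x \<Longrightarrow> length y = length x"
  by (simp add: one_err_def)

lemma one_err_self: "x \<in> one_err G x"
  by (simp add: one_err_def)

lemma one_err_seqs:
  assumes "error_graph q G" "x \<in> seqs q n" "y \<in> one_err G x"
  shows "y \<in> seqs q n"
proof -
  from assms(3) have len: "length y = length x"
    and d: "y = x \<or> (\<exists>i<length x. (x ! i, y ! i) \<in> G \<and> (\<forall>j<length x. j \<noteq> i \<longrightarrow> y ! j = x ! j))"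
    by (auto simp: one_err_def)
  have "\<forall>j<length y. y ! j < q"
  proof (intro allI impI)
    fix j assume j: "j < length y"
    have "x ! j \<in> set x" using j len by simp
    then have xj: "x ! j < q" using assms(2) by (auto simp: seqs_def)
    show "y ! j < q" using d
    proof
      assume "y = x" then show ?thesis using xj by simp
    next
      assume "\<exists>i<length x. (x ! i, y ! i) \<in> G \<and> (\<forall>j<length x. j \<noteq> i \<longrightarrow> y ! j = x ! j)"
      then obtain i where i: "i < length x" "(x ! i, y ! i) \<in> G"
        "\<forall>j<length x. j \<noteq> i \<longrightarrow> y ! j = x ! j" by blast
      show ?thesis
      proof (cases "j = i")
        case True then show ?thesis using i(2) assms(1) by (auto simp: error_graph_def)
      next
        case False then show ?thesis using i(3) j len xj by auto
      qed
    qed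
  qed
  then show ?thesis using len assms(2) by (auto simp: seqs_def in_set_conv_nth)
qed

lemma cloud_iff: "z \<in> fb_cloud G f1 f2 m \<longleftrightarrow>
   (\<exists>y2. z = f1 m @ y2 \<and> y2 \<in> one_err G (f2 m (f1 m))) \<or>
   (\<exists>y1. z = y1 @ f2 m y1 \<and> y1 \<in> one_err G (f1 m))"
  unfolding fb_cloud_def by blast

lemma fwd:
  assumes eg: "error_graph q G" and S: "fb_strategy_sec q G n1 n2 M f1 f2"
  shows "\<exists>Mf :: nat list \<Rightarrow> nat. \<exists>C :: nat list \<Rightarrow> nat list set.
        M = (\<Sum>u\<in>seqs q n1. Mf u) \<and>
        (\<forall>u\<in>seqs q n1. C u \<subseteq> seqs q n2 \<and> code_sec G (C u) \<and> card (C u) = Mf u) \<and>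
        (\<forall>v\<in>seqs q n1. (\<Sum>u\<in>{u\<in>seqs q n1. H_edge G u v}. Mf u)
                          \<le> card (free_points q n2 G (C v)))"
proof -
  have f1s: "\<And>m. m < M \<Longrightarrow> f1 m \<in> seqs q n1"
    and f2s: "\<And>m y. m < M \<Longrightarrow> y \<in> seqs q n1 \<Longrightarrow> f2 m y \<in> seqs q n2"
    using S unfolding fb_strategy_sec_def by blast+
  have dis: "\<And>m m' z. m < M \<Longrightarrow> m' < M \<Longrightarrow> m \<noteq> m' \<Longrightarrow> z \<in> fb_cloud G f1 f2 m
      \<Longrightarrow> z \<in> fb_cloud G f1 f2 m' \<Longrightarrow> False"
    using S unfolding fb_strategy_sec_def by blast
  have inA: "\<And>m y2. y2 \<in> one_err G (f2 m (f1 m)) \<Longrightarrow> f1 m @ y2 \<in> fb_cloud G f1 f2 m"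
    using cloud_iff by blast
  have inB: "\<And>m y1. y1 \<in> one_err G (f1 m) \<Longrightarrow> y1 @ f2 m y1 \<in> fb_cloud G f1 f2 m"
    using cloud_iff by blast
  define Mf where "Mf u = card {m\<in>{..<M}. f1 m = u}" for u
  define C where "C u = (\<lambda>m. f2 m u) ` {m\<in>{..<M}. f1 m = u}" for u
  have inj: "inj_on (\<lambda>m. f2 m u) {m\<in>{..<M}. f1 m = u}" for u
  proof (rule inj_onI)
    fix m m' assume a: "m \<in> {m\<in>{..<M}. f1 m = u}" "m' \<in> {m\<in>{..<M}. f1 m = u}"
      "f2 m u = f2 m' u"
    show "m = m'"
    proof (rule ccontr)
      assume "m \<noteq> m'"
      moreover have "u @ f2 m u \<in> fb_cloud G f1 f2 m" using inA[of "f2 m u" m] a one_err_self by auto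
      moreover have "u @ f2 m u \<in> fb_cloud G f1 f2 m'" using inA[of "f2 m' u" m'] a one_err_self by auto
      ultimately show False using dis a by blast
    qed
  qed
  have sumM: "M = (\<Sum>u\<in>seqs q n1. Mf u)"
  proof -
    have "(\<Sum>u\<in>seqs q n1. Mf u) = (\<Sum>u\<in>seqs q n1. \<Sum>m\<in>{m. m\<in>{..<M} \<and> f1 m = u}. 1)"
      by (simp add: Mf_def)
    also have "\<dots> = (\<Sum>m\<in>{..<M}. 1)" by (rule sum.group) (auto simp: finite_seqs f1s)
    finally show ?thesis by simp
  qed
  have codes: "\<forall>u\<in>seqs q n1. C u \<subseteq> seqs q n2 \<and> code_sec G (C u) \<and> card (C u) = Mf u"
  proof (intro ballI conjI)
    fix u assume u: "u \<in> seqs q n1"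
    show "C u \<subseteq> seqs q n2" using f2s u by (auto simp: C_def)
    show "card (C u) = Mf u" unfolding C_def Mf_def using card_image[OF inj] .
    show "code_sec G (C u)" unfolding code_sec_def
    proof (intro ballI impI)
      fix c c' assume c: "c \<in> C u" "c' \<in> C u" "c \<noteq> c'"
      then obtain m m' where m: "m < M" "f1 m = u" "c = f2 m u" "m' < M" "f1 m' = u" "c' = f2 m' u"
        by (auto simp: C_def)
      with c have mm: "m \<noteq> m'" by auto
      show "one_err G c \<inter> one_err G c' = {}"
      proof (rule ccontr)
        assume "one_err G c \<inter> one_err G c' \<noteq> {}"
        then obtain y where y: "y \<in> one_err G c" "y \<in> one_err G c'" by auto
        have "u @ y \<in> fb_cloud G f1 f2 m" using inA[of y m] y m by auto
        moreover have "u @ y \<in> fb_cloud G f1 f2 m'" using inA[of y m'] y m by auto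
        ultimately show False using dis m mm by blast
      qed
    qed
  qed
  have free: "\<forall>v\<in>seqs q n1. (\<Sum>u\<in>{u\<in>seqs q n1. H_edge G u v}. Mf u)
                          \<le> card (free_points q n2 G (C v))"
  proof
    fix v assume v: "v \<in> seqs q n1"
    define A where "A = {m\<in>{..<M}. H_edge G (f1 m) v}"
    have "(\<Sum>u\<in>{u\<in>seqs q n1. H_edge G u v}. Mf u)
        = (\<Sum>u\<in>{u\<in>seqs q n1. H_edge G u v}. \<Sum>m\<in>{m. m\<in>A \<and> f1 m = u}. 1)"
    proof (rule sum.cong)
      fix u assume "u \<in> {u\<in>seqs q n1. H_edge G u v}"
      then have "{m. m\<in>A \<and> f1 m = u} = {m\<in>{..<M}. f1 m = u}" by (auto simp: A_def)
      then show "Mf u = (\<Sum>m\<in>{m. m\<in>A \<and> f1 m = u}. 1)" by (simp add: Mf_def)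
    qed simp
    also have "\<dots> = (\<Sum>m\<in>A. 1)" by (rule sum.group) (auto simp: finite_seqs f1s A_def)
    also have "\<dots> = card A" by simp
    also have "card A \<le> card (free_points q n2 G (C v))"
    proof (rule card_inj_on_le[where f = "\<lambda>m. f2 m v"])
      show "finite (free_points q n2 G (C v))" by (simp add: free_points_def finite_seqs)
      show "inj_on (\<lambda>m. f2 m v) A"
      proof (rule inj_onI)
        fix m m' assume a: "m \<in> A" "m' \<in> A" "f2 m v = f2 m' v"
        show "m = m'"
        proof (rule ccontr)
          assume "m \<noteq> m'"
          moreover have "v @ f2 m v \<in> fb_cloud G f1 f2 m" using inB[of v m] a
            by (auto simp: A_def H_edge_def)
          moreover have "v @ f2 m v \<in> fb_cloud G f1 f2 m'" using inB[of v m'] a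
            by (auto simp: A_def H_edge_def)
          ultimately show False using dis a by (auto simp: A_def)
        qed
      qed
      show "(\<lambda>m. f2 m v) ` A \<subseteq> free_points q n2 G (C v)"
      proof
        fix z assume "z \<in> (\<lambda>m. f2 m v) ` A"
        then obtain m where m: "m \<in> A" "z = f2 m v" by auto
        have zs: "z \<in> seqs q n2" using m f2s v by (auto simp: A_def)
        have "z \<notin> one_err G c" if c: "c \<in> C v" for c
        proof
          assume zc: "z \<in> one_err G c"
          from c obtain m' where m': "m' < M" "f1 m' = v" "c = f2 m' v" by (auto simp: C_def)
          have mm: "m \<noteq> m'" using m m' by (auto simp: A_def H_edge_def)
          have "v @ z \<in> fb_cloud G f1 f2 m" using inB[of v m] m by (auto simp: A_def H_edge_def)
          moreover have "v @ z \<in> fb_cloud G f1 f2 m'" using inA[of z m'] m' zc by auto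
          ultimately show False using dis m m' mm by (auto simp: A_def)
        qed
        then show "z \<in> free_points q n2 G (C v)" using zs by (auto simp: free_points_def)
      qed
    qed
    finally show "(\<Sum>u\<in>{u\<in>seqs q n1. H_edge G u v}. Mf u) \<le> card (free_points q n2 G (C v))" .
  qed
  show ?thesis using sumM codes free by blast
qed

lemma bwd:
  assumes q: "q \<ge> 2" and eg: "error_graph q G"
    and Msum: "M = (\<Sum>u\<in>seqs q n1. Mf u)"
    and codes: "\<forall>u\<in>seqs q n1. C u \<subseteq> seqs q n2 \<and> code_sec G (C u) \<and> card (C u) = Mf u"
    and free: "\<forall>v\<in>seqs q n1. (\<Sum>u\<in>{u\<in>seqs q n1. H_edge G u v}. Mf u)
                          \<le> card (free_points q n2 G (C v))"
  shows "\<exists>f1 f2. fb_strategy_sec q G n1 n2 M f1 f2"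
proof -
  define S where "S = Sigma (seqs q n1) C"
  have finC: "\<And>u. u \<in> seqs q n1 \<Longrightarrow> finite (C u)"
    using codes finite_seqs finite_subset by blast
  have finS: "finite S" unfolding S_def using finC finite_seqs by auto
  have cardS: "card S = M" unfolding S_def Msum using finC codes by (simp add: finite_seqs)
  obtain g where g: "bij_betw g {..<M} S"
    using ex_bij_betw_nat_finite[OF finS] cardS by (auto simp: atLeast0LessThan)
  have gS: "\<And>m. m < M \<Longrightarrow> g m \<in> S" using g by (auto simp: bij_betw_def)
  have ginj: "\<And>m m'. m < M \<Longrightarrow> m' < M \<Longrightarrow> g m = g m' \<Longrightarrow> m = m'"
    using g by (auto simp: bij_betw_def inj_on_def)
  define A where "A v = {m\<in>{..<M}. H_edge G (fst (g m)) v}" for v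
  define F where "F v = free_points q n2 G (C v)" for v
  have "\<forall>v\<in>seqs q n1. \<exists>h. h ` A v \<subseteq> F v \<and> inj_on h (A v)"
  proof
    fix v assume v: "v \<in> seqs q n1"
    have "bij_betw g (A v) (Sigma {u\<in>seqs q n1. H_edge G u v} C)"
    proof (rule bij_betw_subset[OF g])
      show "A v \<subseteq> {..<M}" by (auto simp: A_def)
      show "g ` A v = Sigma {u\<in>seqs q n1. H_edge G u v} C"
      proof
        show "g ` A v \<subseteq> Sigma {u\<in>seqs q n1. H_edge G u v} C"
          using gS by (force simp: A_def S_def)
        show "Sigma {u\<in>seqs q n1. H_edge G u v} C \<subseteq> g ` A v"
        proof
          fix p assume p: "p \<in> Sigma {u\<in>seqs q n1. H_edge G u v} C"
          then have "p \<in> S" by (auto simp: S_def)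
          then obtain m where m: "m < M" "p = g m" using g by (auto simp: bij_betw_def)
          then show "p \<in> g ` A v" using p by (auto simp: A_def)
        qed
      qed
    qed
    then have "card (A v) = card (Sigma {u\<in>seqs q n1. H_edge G u v} C)"
      by (rule bij_betw_same_card)
    also have "\<dots> = (\<Sum>u\<in>{u\<in>seqs q n1. H_edge G u v}. card (C u))"
      by (rule card_SigmaI) (auto simp: finite_seqs finC)
    also have "\<dots> = (\<Sum>u\<in>{u\<in>seqs q n1. H_edge G u v}. Mf u)"
      using codes by (auto intro: sum.cong)
    also have "\<dots> \<le> card (F v)" using free v by (simp add: F_def)
    finally have "card (A v) \<le> card (F v)" .
    moreover have "finite (F v)" by (simp add: F_def free_points_def finite_seqs)
    moreover have "finite (A v)" by (simp add: A_def)
    ultimately show "\<exists>h. h ` A v \<subseteq> F v \<and> inj_on h (A v)"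
      using card_le_inj[of "A v" "F v"] by blast
  qed
  then obtain H where H: "\<And>v. v \<in> seqs q n1 \<Longrightarrow> H v ` A v \<subseteq> F v \<and> inj_on (H v) (A v)"
    by metis
  define f1 where "f1 m = fst (g m)" for m
  define f2 where "f2 m y = (if y = fst (g m) then snd (g m)
      else if y \<in> seqs q n1 \<and> H_edge G (fst (g m)) y then H y m else replicate n2 0)" for m y
  have f1s: "\<And>m. m < M \<Longrightarrow> f1 m \<in> seqs q n1" using gS unfolding f1_def S_def by (metis SigmaE fst_conv)
  have gC: "\<And>m. m < M \<Longrightarrow> snd (g m) \<in> C (f1 m)" using gS unfolding f1_def S_def by (metis SigmaE fst_conv snd_conv)
  have rep: "replicate n2 0 \<in> seqs q n2" using q by (auto simp: seqs_def)
  have f2s: "\<And>m y. m < M \<Longrightarrow> y \<in> seqs q n1 \<Longrightarrow> f2 m y \<in> seqs q n2"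
  proof -
    fix m y assume m: "m < M" and y: "y \<in> seqs q n1"
    show "f2 m y \<in> seqs q n2"
    proof (cases "y = fst (g m)")
      case True then show ?thesis using gC[OF m] codes f1s[OF m] by (auto simp: f2_def f1_def)
    next
      case False
      show ?thesis
      proof (cases "H_edge G (fst (g m)) y")
        case True
        then have "m \<in> A y" using m by (simp add: A_def)
        then have "H y m \<in> F y" using H[OF y] by auto
        then show ?thesis using False True y by (auto simp: f2_def F_def free_points_def)
      next
        case False2: False
        then show ?thesis using False rep by (auto simp: f2_def)
      qed
    qed
  qed
  have nf: "\<And>m z. m < M \<Longrightarrow> z \<in> fb_cloud G f1 f2 m \<Longrightarrow>
      (\<exists>y2. z = f1 m @ y2 \<and> y2 \<in> one_err G (snd (g m))) \<or>
      (\<exists>y1. z = y1 @ H y1 m \<and> y1 \<in> seqs q n1 \<and> m \<in> A y1)"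
  proof -
    fix m z assume m: "m < M" and z: "z \<in> fb_cloud G f1 f2 m"
    have f2self: "f2 m (f1 m) = snd (g m)" by (simp add: f2_def f1_def)
    from z[unfolded cloud_iff] show "?thesis m z"
    proof
      assume "\<exists>y2. z = f1 m @ y2 \<and> y2 \<in> one_err G (f2 m (f1 m))"
      then show ?thesis using f2self by auto
    next
      assume "\<exists>y1. z = y1 @ f2 m y1 \<and> y1 \<in> one_err G (f1 m)"
      then obtain y1 where y1: "z = y1 @ f2 m y1" "y1 \<in> one_err G (f1 m)" by blast
      show ?thesis
      proof (cases "y1 = f1 m")
        case True then show ?thesis using y1 f2self one_err_self by auto
      next
        case False
        have ys: "y1 \<in> seqs q n1" using one_err_seqs[OF eg f1s[OF m] y1(2)] .
        have he: "H_edge G (fst (g m)) y1" using False y1(2) by (simp add: H_edge_def f1_def)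
        then have "f2 m y1 = H y1 m" using False ys by (simp add: f2_def f1_def)
        moreover have "m \<in> A y1" using he m by (simp add: A_def)
        ultimately show ?thesis using y1 ys by auto
      qed
    qed
  qed
  have lenf1: "\<And>m. m < M \<Longrightarrow> length (f1 m) = n1" using f1s by (simp add: seqs_def)
  have mixed: "False" if m: "m < M" "m' < M" and y2: "y2 \<in> one_err G (snd (g m))"
    and y1: "y1 \<in> seqs q n1" "m' \<in> A y1" and eq: "f1 m @ y2 = y1 @ H y1 m'" for m m' y1 y2
  proof -
    have "length y1 = n1" using y1 by (simp add: seqs_def)
    then have "f1 m = y1" "y2 = H y1 m'" using eq lenf1[OF m(1)] by auto
    then have "y2 \<in> F (f1 m)" using H y1 by auto
    then have "y2 \<notin> one_err G (snd (g m))" using gC[OF m(1)] by (auto simp: F_def free_points_def)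
    then show False using y2 by simp
  qed
  have dis: "fb_cloud G f1 f2 m \<inter> fb_cloud G f1 f2 m' = {}"
    if m: "m < M" "m' < M" "m \<noteq> m'" for m m'
  proof (rule ccontr)
    assume "fb_cloud G f1 f2 m \<inter> fb_cloud G f1 f2 m' \<noteq> {}"
    then obtain z where z: "z \<in> fb_cloud G f1 f2 m" "z \<in> fb_cloud G f1 f2 m'" by blast
    from nf[OF m(1) z(1)] nf[OF m(2) z(2)] show False
    proof (elim disjE exE conjE)
      fix a b assume a: "z = f1 m @ a" "a \<in> one_err G (snd (g m))"
        and b: "z = f1 m' @ b" "b \<in> one_err G (snd (g m'))"
      then have eq: "f1 m = f1 m'" "a = b" using lenf1 m by auto
      show False
      proof (cases "snd (g m) = snd (g m')")
        case True
        then have "g m = g m'" using eq by (simp add: f1_def prod_eq_iff)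
        then show False using ginj m by blast
      next
        case False
        have "code_sec G (C (f1 m))" using codes f1s m by blast
        then have "one_err G (snd (g m)) \<inter> one_err G (snd (g m')) = {}"
          using gC m eq False unfolding code_sec_def by metis
        then show False using a b eq by blast
      qed
    next
      fix a y assume a: "z = f1 m @ a" "a \<in> one_err G (snd (g m))"
        and b: "z = y @ H y m'" "y \<in> seqs q n1" "m' \<in> A y"
      then show False using mixed[of m m' a y] m by auto
    next
      fix a y assume a: "z = f1 m' @ a" "a \<in> one_err G (snd (g m'))"
        and b: "z = y @ H y m" "y \<in> seqs q n1" "m \<in> A y"
      then show False using mixed[of m' m a y] m by auto
    next
      fix y y' assume a: "z = y @ H y m" "y \<in> seqs q n1" "m \<in> A y"
        and b: "z = y' @ H y' m'" "y' \<in> seqs q n1" "m' \<in> A y'"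
      then have "y = y'" "H y m = H y m'" by (auto simp: seqs_def)
      then have "m = m'" using H[OF a(2)] a b inj_onD by metis
      then show False using m by simp
    qed
  qed
  have "fb_strategy_sec q G n1 n2 M f1 f2"
    unfolding fb_strategy_sec_def using f1s f2s dis by blast
  then show ?thesis by blast
qed

theorem theorem1:
  fixes q n1 n2 M :: nat and G :: "(nat \<times> nat) set"
  assumes "q \<ge> 2" and "error_graph q G"
  shows "(\<exists>f1 f2. fb_strategy_sec q G n1 n2 M f1 f2) \<longleftrightarrow>
    (\<exists>Mf :: nat list \<Rightarrow> nat. \<exists>C :: nat list \<Rightarrow> nat list set.
        M = (\<Sum>u\<in>seqs q n1. Mf u) \<and>
        (\<forall>u\<in>seqs q n1. C u \<subseteq> seqs q n2 \<and> code_sec G (C u) \<and> card (C u) = Mf u) \<and>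
        (\<forall>v\<in>seqs q n1. (\<Sum>u\<in>{u\<in>seqs q n1. H_edge G u v}. Mf u)
                          \<le> card (free_points q n2 G (C v))))"
proof
  assume "\<exists>f1 f2. fb_strategy_sec q G n1 n2 M f1 f2"
  then obtain f1 f2 where "fb_strategy_sec q G n1 n2 M f1 f2" by blast
  then show "\<exists>Mf C. M = (\<Sum>u\<in>seqs q n1. Mf u) \<and>
        (\<forall>u\<in>seqs q n1. C u \<subseteq> seqs q n2 \<and> code_sec G (C u) \<and> card (C u) = Mf u) \<and>
        (\<forall>v\<in>seqs q n1. (\<Sum>u\<in>{u\<in>seqs q n1. H_edge G u v}. Mf u)
                          \<le> card (free_points q n2 G (C v)))" using fwd[OF assms(2)] by blast
next
  assume "\<exists>Mf C. M = (\<Sum>u\<in>seqs q n1. Mf u) \<and>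
        (\<forall>u\<in>seqs q n1. C u \<subseteq> seqs q n2 \<and> code_sec G (C u) \<and> card (C u) = Mf u) \<and>
        (\<forall>v\<in>seqs q n1. (\<Sum>u\<in>{u\<in>seqs q n1. H_edge G u v}. Mf u)
                          \<le> card (free_points q n2 G (C v)))"
  then obtain Mf C where "M = (\<Sum>u\<in>seqs q n1. Mf u)"
    "\<forall>u\<in>seqs q n1. C u \<subseteq> seqs q n2 \<and> code_sec G (C u) \<and> card (C u) = Mf u"
    "\<forall>v\<in>seqs q n1. (\<Sum>u\<in>{u\<in>seqs q n1. H_edge G u v}. Mf u)
                          \<le> card (free_points q n2 G (C v))" by blast
  then show "\<exists>f1 f2. fb_strategy_sec q G n1 n2 M f1 f2" using bwd[OF assms] by blast
qed

end
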